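(* Let $G$ be a semi-perfect graph and let $k$ be a positive integer. The following statements are equivalent: (a) $G$ has a $k$-tight clique partition; (b) $G$ has a $k$-tight $\alpha$-clique partition; (c) every $\alpha$-clique partition of $G$ is $k$-tight; (d) $\mu_\alpha(G)\le k-1$.
   Context: All graphs are finite, simple and undirected. For a graph $G$, $\alpha(G)$ is the maximum size of an independent set and $i(G)$ is the minimum size of a maximal (with respect to inclusion) independent set; the independence gap is $\mu_\alpha(G)=\alpha(G)-i(G)$. $\theta(G)$ denotes the minimum number of cliques whose union is $V(G)$. A graph $G$ is semi-perfect if $\alpha(G)=\theta(G)$. A clique partition of $G$ is a set of pairwise disjoint cliques whose union is $V(G)$; an $\alpha$-clique partition is a clique partition consisting of exactly $\alpha(G)$ cliques. For a positive integer $k$, a clique partition of $G$ is $k$-tight if for every $k$ cliques of the partition, their union intersects every maximal independent set of $G$. *)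

theory Defs
  imports Main
begin

text \<open>A finite simple graph is given by a finite vertex set V and a symmetric,
irreflexive adjacency relation E (only its restriction to V matters).\<close>

definition simple_graph :: "'a set \<Rightarrow> ('a \<Rightarrow> 'a \<Rightarrow> bool) \<Rightarrow> bool" where
  "simple_graph V E \<longleftrightarrow> finite V \<and> (\<forall>x y. E x y \<longrightarrow> E y x) \<and> (\<forall>x. \<not> E x x)"

definition is_clique :: "'a set \<Rightarrow> ('a \<Rightarrow> 'a \<Rightarrow> bool) \<Rightarrow> 'a set \<Rightarrow> bool" where
  "is_clique V E C \<longleftrightarrow> C \<subseteq> V \<and> (\<forall>x\<in>C. \<forall>y\<in>C. x \<noteq> y \<longrightarrow> E x y)"

definition indep_set :: "'a set \<Rightarrow> ('a \<Rightarrow> 'a \<Rightarrow> bool) \<Rightarrow> 'a set \<Rightarrow> bool" where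
  "indep_set V E S \<longleftrightarrow> S \<subseteq> V \<and> (\<forall>x\<in>S. \<forall>y\<in>S. \<not> E x y)"

definition maximal_indep_set :: "'a set \<Rightarrow> ('a \<Rightarrow> 'a \<Rightarrow> bool) \<Rightarrow> 'a set \<Rightarrow> bool" where
  "maximal_indep_set V E S \<longleftrightarrow> indep_set V E S \<and> (\<forall>T. indep_set V E T \<longrightarrow> S \<subseteq> T \<longrightarrow> T = S)"

definition alpha :: "'a set \<Rightarrow> ('a \<Rightarrow> 'a \<Rightarrow> bool) \<Rightarrow> nat" where
  "alpha V E = Max {card S | S. indep_set V E S}"

definition indep_domination :: "'a set \<Rightarrow> ('a \<Rightarrow> 'a \<Rightarrow> bool) \<Rightarrow> nat" where
  "indep_domination V E = Min {card S | S. maximal_indep_set V E S}"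

text \<open>Independence gap mu_alpha(G) = alpha(G) - i(G).\<close>
definition indep_gap :: "'a set \<Rightarrow> ('a \<Rightarrow> 'a \<Rightarrow> bool) \<Rightarrow> nat" where
  "indep_gap V E = alpha V E - indep_domination V E"

definition clique_cover_number :: "'a set \<Rightarrow> ('a \<Rightarrow> 'a \<Rightarrow> bool) \<Rightarrow> nat" where
  "clique_cover_number V E =
     Min {card \<C> | \<C>. finite \<C> \<and> (\<forall>C\<in>\<C>. is_clique V E C) \<and> \<Union>\<C> = V}"

definition semi_perfect :: "'a set \<Rightarrow> ('a \<Rightarrow> 'a \<Rightarrow> bool) \<Rightarrow> bool" where
  "semi_perfect V E \<longleftrightarrow> alpha V E = clique_cover_number V E"

definition clique_partition :: "'a set \<Rightarrow> ('a \<Rightarrow> 'a \<Rightarrow> bool) \<Rightarrow> 'a set set \<Rightarrow> bool" where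
  "clique_partition V E P \<longleftrightarrow>
     (\<forall>C\<in>P. is_clique V E C \<and> C \<noteq> {}) \<and>
     (\<forall>C\<in>P. \<forall>D\<in>P. C \<noteq> D \<longrightarrow> C \<inter> D = {}) \<and>
     \<Union>P = V"

definition alpha_clique_partition :: "'a set \<Rightarrow> ('a \<Rightarrow> 'a \<Rightarrow> bool) \<Rightarrow> 'a set set \<Rightarrow> bool" where
  "alpha_clique_partition V E P \<longleftrightarrow> clique_partition V E P \<and> card P = alpha V E"

definition k_tight :: "'a set \<Rightarrow> ('a \<Rightarrow> 'a \<Rightarrow> bool) \<Rightarrow> nat \<Rightarrow> 'a set set \<Rightarrow> bool" where
  "k_tight V E k P \<longleftrightarrow> clique_partition V E P \<and>
     (\<forall>F\<subseteq>P. card F = k \<longrightarrow> (\<forall>S. maximal_indep_set V E S \<longrightarrow> \<Union>F \<inter> S \<noteq> {}))"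

end

theory Submission
  imports Defs
begin

lemma cover_to_partition:
  assumes "finite CC" "\<forall>C\<in>CC. is_clique V E C"
  shows "\<exists>P. (\<forall>C\<in>P. is_clique V E C \<and> C \<noteq> {}) \<and> (\<forall>C\<in>P. \<forall>D\<in>P. C \<noteq> D \<longrightarrow> C \<inter> D = {})
           \<and> \<Union>P = \<Union>CC \<and> finite P \<and> card P \<le> card CC"
  using assms
proof (induction CC rule: finite_induct)
  case empty
  then show ?case by (rule_tac x="{}" in exI) auto
next
  case (insert C CC)
  then obtain P where P: "\<forall>C\<in>P. is_clique V E C \<and> C \<noteq> {}" "\<forall>C\<in>P. \<forall>D\<in>P. C \<noteq> D \<longrightarrow> C \<inter> D = {}"
           "\<Union>P = \<Union>CC" "finite P" "card P \<le> card CC" by auto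
  have cl: "is_clique V E C" using insert by auto
  show ?case
  proof (cases "C - \<Union>CC = {}")
    case True
    then show ?thesis using P insert by (rule_tac x=P in exI) auto
  next
    case False
    let ?D = "C - \<Union>CC"
    have "is_clique V E ?D" using cl unfolding is_clique_def by auto
    moreover have "\<forall>X\<in>P. ?D \<inter> X = {}" using P(3) by auto
    moreover have "card (insert ?D P) \<le> card (insert C CC)"
      using P(4,5) insert(1,2) by (simp add: card_insert_if)
    moreover have "\<Union>(insert ?D P) = \<Union>(insert C CC)" using P(3) by auto
    moreover have "\<forall>X\<in>insert ?D P. \<forall>Y\<in>insert ?D P. X \<noteq> Y \<longrightarrow> X \<inter> Y = {}"
      using P(2) \<open>\<forall>X\<in>P. ?D \<inter> X = {}\<close> by (simp add: Int_commute)
    ultimately show ?thesis using P False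
      by (rule_tac x="insert ?D P" in exI) simp
  qed
qed

lemma fin_indep: "finite V \<Longrightarrow> finite {card S |S. indep_set V E S}"
proof -
  assume "finite V"
  have "{card S |S. indep_set V E S} \<subseteq> card ` Pow V" unfolding indep_set_def by auto
  then show ?thesis using \<open>finite V\<close> finite_subset by blast
qed

lemma alpha_ge: "finite V \<Longrightarrow> indep_set V E S \<Longrightarrow> card S \<le> alpha V E"
  unfolding alpha_def by (rule Max_ge[OF fin_indep]) auto

lemma alpha_attained: "finite V \<Longrightarrow> \<exists>S. indep_set V E S \<and> card S = alpha V E"
proof -
  assume f: "finite V"
  have "{} \<in> {S. indep_set V E S}" unfolding indep_set_def by auto
  then have "alpha V E \<in> {card S |S. indep_set V E S}"
    unfolding alpha_def using Max_in[OF fin_indep[OF f]] by blast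
  then show ?thesis by auto
qed

lemma maximal_exists: "finite V \<Longrightarrow> \<exists>S. maximal_indep_set V E S"
proof -
  assume f: "finite V"
  obtain S where S: "indep_set V E S" "card S = alpha V E" using alpha_attained[OF f] by blast
  have "maximal_indep_set V E S" unfolding maximal_indep_set_def
  proof (intro conjI allI impI)
    fix T assume T: "indep_set V E T" "S \<subseteq> T"
    have "finite T" using T f unfolding indep_set_def using finite_subset by blast
    moreover have "card T \<le> card S" using alpha_ge[OF f T(1)] S by simp
    ultimately show "T = S" using T(2) card_seteq by blast
  qed (rule S(1))
  then show ?thesis by blast
qed

lemma fin_max: "finite V \<Longrightarrow> finite {card S |S. maximal_indep_set V E S}"
proof -
  assume "finite V"
  have "{card S |S. maximal_indep_set V E S} \<subseteq> card ` Pow V"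
    unfolding maximal_indep_set_def indep_set_def by auto
  then show ?thesis using \<open>finite V\<close> finite_subset by blast
qed

lemma idom_le: "finite V \<Longrightarrow> maximal_indep_set V E S \<Longrightarrow> indep_domination V E \<le> card S"
  unfolding indep_domination_def by (rule Min_le[OF fin_max]) auto

lemma idom_attained: "finite V \<Longrightarrow> \<exists>S. maximal_indep_set V E S \<and> card S = indep_domination V E"
proof -
  assume f: "finite V"
  obtain S0 where "maximal_indep_set V E S0" using maximal_exists[OF f] by blast
  then have "indep_domination V E \<in> {card S |S. maximal_indep_set V E S}"
    unfolding indep_domination_def using Min_in[OF fin_max[OF f]] by blast
  then show ?thesis by auto
qed

lemma fin_cover: "finite V \<Longrightarrow>
   finite {card \<C> | \<C>. finite \<C> \<and> (\<forall>C\<in>\<C>. is_clique V E C) \<and> \<Union>\<C> = V}"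
proof -
  assume "finite V"
  have "{card \<C> | \<C>. finite \<C> \<and> (\<forall>C\<in>\<C>. is_clique V E C) \<and> \<Union>\<C> = V} \<subseteq> card ` Pow (Pow V)"
  proof
    fix n assume "n \<in> {card \<C> | \<C>. finite \<C> \<and> (\<forall>C\<in>\<C>. is_clique V E C) \<and> \<Union>\<C> = V}"
    then obtain \<C> where "n = card \<C>" "\<Union>\<C> = V" by blast
    then have "\<C> \<in> Pow (Pow V)" by auto
    then show "n \<in> card ` Pow (Pow V)" using \<open>n = card \<C>\<close> by (rule rev_image_eqI)
  qed
  moreover have "finite (card ` Pow (Pow V))" using \<open>finite V\<close> by simp
  ultimately show ?thesis by (rule finite_subset)
qed

lemma partition_finite: "finite V \<Longrightarrow> clique_partition V E P \<Longrightarrow> finite P"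
  unfolding clique_partition_def using finite_UnionD by metis

lemma theta_le: "finite V \<Longrightarrow> clique_partition V E P \<Longrightarrow> clique_cover_number V E \<le> card P"
proof -
  assume f: "finite V" and cp: "clique_partition V E P"
  have "finite P" using partition_finite[OF f cp] .
  moreover have "\<forall>C\<in>P. is_clique V E C" "\<Union>P = V" using cp unfolding clique_partition_def by auto
  ultimately have "card P \<in> {card \<C> | \<C>. finite \<C> \<and> (\<forall>C\<in>\<C>. is_clique V E C) \<and> \<Union>\<C> = V}"
    by blast
  then show ?thesis unfolding clique_cover_number_def by (rule Min_le[OF fin_cover[OF f]])
qed

lemma alpha_partition_exists:
  assumes "simple_graph V E" "semi_perfect V E"
  shows "\<exists>P. alpha_clique_partition V E P"
proof -
  have f: "finite V" using assms(1) unfolding simple_graph_def by auto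
  have s1: "finite ((\<lambda>v. {v}) ` V)" using f by simp
  have s2: "\<forall>C\<in>(\<lambda>v. {v}) ` V. is_clique V E C" unfolding is_clique_def by auto
  have s3: "\<Union>((\<lambda>v. {v}) ` V) = V" by auto
  have "card ((\<lambda>v. {v}) ` V) \<in> {card \<C> | \<C>. finite \<C> \<and> (\<forall>C\<in>\<C>. is_clique V E C) \<and> \<Union>\<C> = V}"
    using s1 s2 s3 by blast
  then have ne: "{card \<C> | \<C>. finite \<C> \<and> (\<forall>C\<in>\<C>. is_clique V E C) \<and> \<Union>\<C> = V} \<noteq> {}" by blast
  have "clique_cover_number V E \<in> {card \<C> | \<C>. finite \<C> \<and> (\<forall>C\<in>\<C>. is_clique V E C) \<and> \<Union>\<C> = V}"
    unfolding clique_cover_number_def by (rule Min_in[OF fin_cover[OF f] ne])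
  then obtain CC where CC0: "clique_cover_number V E = card CC"
      "finite CC \<and> (\<forall>C\<in>CC. is_clique V E C) \<and> \<Union>CC = V"
    unfolding mem_Collect_eq by (elim exE conjE) (rule that, assumption, blast)
  have CC: "finite CC" "\<forall>C\<in>CC. is_clique V E C" "\<Union>CC = V"
      "card CC = clique_cover_number V E" using CC0 by simp_all
  obtain P where P: "\<forall>C\<in>P. is_clique V E C \<and> C \<noteq> {}" "\<forall>C\<in>P. \<forall>D\<in>P. C \<noteq> D \<longrightarrow> C \<inter> D = {}"
           "\<Union>P = \<Union>CC" "finite P" "card P \<le> card CC"
    using cover_to_partition[OF CC(1,2)] by blast
  have U: "\<Union>P = V" using P(3) CC(3) by (rule trans)
  have cp: "clique_partition V E P" unfolding clique_partition_def using P(1) P(2) U by (intro conjI)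
  have a: "alpha V E = clique_cover_number V E" using assms(2) unfolding semi_perfect_def .
  have "card P = alpha V E" using theta_le[OF f cp] P(5) CC(4) a by linarith
  then show ?thesis using cp unfolding alpha_clique_partition_def by blast
qed

lemma hit_card:
  assumes "clique_partition V E P" "indep_set V E S" "finite V"
  shows "card {C\<in>P. C \<inter> S \<noteq> {}} = card S"
proof -
  note cpd = assms(1)[unfolded clique_partition_def]
  have cl: "\<forall>C\<in>P. is_clique V E C \<and> C \<noteq> {}" using cpd by (rule conjunct1)
  have disj: "\<forall>C\<in>P. \<forall>D\<in>P. C \<noteq> D \<longrightarrow> C \<inter> D = {}" using cpd by (metis conjunct1 conjunct2)
  have UP: "\<Union>P = V" using cpd by (metis conjunct2)
  have uniq: "\<exists>!C. C \<in> P \<and> s \<in> C" if sS: "s \<in> S" for s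
  proof -
    have "s \<in> V" using sS assms(2) unfolding indep_set_def by auto
    then have "s \<in> \<Union>P" using UP by simp
    then obtain C where C: "C \<in> P" "s \<in> C" by blast
    show ?thesis
    proof (rule ex1I[of _ C])
      show "C \<in> P \<and> s \<in> C" using C by simp
      fix D assume "D \<in> P \<and> s \<in> D"
      then show "D = C" using disj C by blast
    qed
  qed
  define h where "h s = (THE C. C \<in> P \<and> s \<in> C)" for s
  have h: "h s \<in> P \<and> s \<in> h s" if "s \<in> S" for s
    unfolding h_def by (rule theI'[OF uniq[OF that]])
  have "inj_on h S"
  proof (rule inj_onI)
    fix x y assume xy: "x \<in> S" "y \<in> S" "h x = h y"
    show "x = y"
    proof (rule ccontr)
      assume "x \<noteq> y"
      have hx: "h x \<in> P" "x \<in> h x" "y \<in> h x" using h[OF xy(1)] h[OF xy(2)] xy(3) by auto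
      have "is_clique V E (h x)" using cl hx(1) by blast
      then have "E x y" using hx(2,3) \<open>x \<noteq> y\<close> unfolding is_clique_def by blast
      then show False using xy assms(2) unfolding indep_set_def by blast
    qed
  qed
  moreover have "h ` S = {C\<in>P. C \<inter> S \<noteq> {}}"
  proof
    show "h ` S \<subseteq> {C\<in>P. C \<inter> S \<noteq> {}}"
    proof
      fix C assume "C \<in> h ` S"
      then obtain s where "s \<in> S" "C = h s" by blast
      then show "C \<in> {C\<in>P. C \<inter> S \<noteq> {}}" using h[OF \<open>s \<in> S\<close>] by blast
    qed
    show "{C\<in>P. C \<inter> S \<noteq> {}} \<subseteq> h ` S"
    proof
      fix C assume C: "C \<in> {C\<in>P. C \<inter> S \<noteq> {}}"
      then obtain s where s: "s \<in> C" "s \<in> S" by blast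
      have "C \<in> P" using C by simp
      then have "h s = C" using h[OF s(2)] s(1) disj by blast
      then show "C \<in> h ` S" using s by blast
    qed
  qed
  ultimately show ?thesis using card_image[of h S] by simp
qed

lemma miss_card:
  assumes "clique_partition V E P" "indep_set V E S" "finite V"
  shows "card {C\<in>P. C \<inter> S = {}} = card P - card S"
proof -
  have fP: "finite P" using partition_finite assms by blast
  have "P = {C\<in>P. C \<inter> S \<noteq> {}} \<union> {C\<in>P. C \<inter> S = {}}" by auto
  then have "card P = card {C\<in>P. C \<inter> S \<noteq> {}} + card {C\<in>P. C \<inter> S = {}}"
    using fP by (metis (no_types, lifting) card_Un_disjoint disjoint_iff finite_Un mem_Collect_eq)
  then show ?thesis using hit_card[OF assms] by simp
qed

lemma T1:
  assumes "k_tight V E k P" "maximal_indep_set V E S" "finite V"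
  shows "card P - card S < k"
proof (rule ccontr)
  assume neg: "\<not> card P - card S < k"
  have cp: "clique_partition V E P" using assms(1) unfolding k_tight_def by auto
  have isS: "indep_set V E S" using assms(2) unfolding maximal_indep_set_def by auto
  have fP: "finite P" using partition_finite assms(3) cp by blast
  have "k \<le> card {C\<in>P. C \<inter> S = {}}" using miss_card[OF cp isS assms(3)] neg by simp
  then obtain F where F: "F \<subseteq> {C\<in>P. C \<inter> S = {}}" "card F = k"
    using obtain_subset_with_card_n by blast
  then have "\<Union>F \<inter> S = {}" by blast
  moreover have "F \<subseteq> P" using F by blast
  ultimately show False using assms(1,2) F(2) unfolding k_tight_def by blast
qed

lemma T2:
  assumes "clique_partition V E P" "finite V" "\<forall>S. maximal_indep_set V E S \<longrightarrow> card P - card S < k"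
  shows "k_tight V E k P"
  unfolding k_tight_def
proof (intro conjI allI impI assms(1))
  fix F S assume F: "F \<subseteq> P" "card F = k" and S: "maximal_indep_set V E S"
  have isS: "indep_set V E S" using S unfolding maximal_indep_set_def by auto
  show "\<Union>F \<inter> S \<noteq> {}"
  proof
    assume "\<Union>F \<inter> S = {}"
    then have "F \<subseteq> {C\<in>P. C \<inter> S = {}}" using F by blast
    moreover have "finite P" using partition_finite assms by blast
    ultimately have "card F \<le> card {C\<in>P. C \<inter> S = {}}" by (intro card_mono) simp_all
    moreover have "card P - card S < k" using assms(3) S by blast
    ultimately show False using miss_card[OF assms(1) isS assms(2)] F(2) by linarith
  qed
qed

theorem mainTheorem4:
  fixes V :: "'a set" and E :: "'a \<Rightarrow> 'a \<Rightarrow> bool" and k :: nat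
  assumes "simple_graph V E"
    and "semi_perfect V E"
    and "k \<ge> 1"
  shows "((\<exists>P. k_tight V E k P) \<longleftrightarrow> (\<exists>P. alpha_clique_partition V E P \<and> k_tight V E k P))
       \<and> ((\<exists>P. alpha_clique_partition V E P \<and> k_tight V E k P) \<longleftrightarrow>
            (\<forall>P. alpha_clique_partition V E P \<longrightarrow> k_tight V E k P))
       \<and> ((\<forall>P. alpha_clique_partition V E P \<longrightarrow> k_tight V E k P) \<longleftrightarrow> indep_gap V E \<le> k - 1)"
proof -
  have f: "finite V" using assms(1) unfolding simple_graph_def by auto
  have ad: "indep_gap V E \<le> k - 1" if "k_tight V E k P" for P
  proof -
    obtain S0 where S0: "maximal_indep_set V E S0" "card S0 = indep_domination V E"
      using idom_attained[OF f] by blast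
    have cp: "clique_partition V E P" using that unfolding k_tight_def by auto
    have "alpha V E \<le> card P" using theta_le[OF f cp] assms(2) unfolding semi_perfect_def by simp
    moreover have "card P - card S0 < k" using T1[OF that S0(1) f] .
    ultimately show ?thesis using S0(2) unfolding indep_gap_def by linarith
  qed
  have dc: "k_tight V E k P" if "indep_gap V E \<le> k - 1" "alpha_clique_partition V E P" for P
  proof (rule T2)
    show cp: "clique_partition V E P" using that(2) unfolding alpha_clique_partition_def by auto
    show "finite V" by (rule f)
    show "\<forall>S. maximal_indep_set V E S \<longrightarrow> card P - card S < k"
    proof (intro allI impI)
      fix S assume "maximal_indep_set V E S"
      then have "indep_domination V E \<le> card S" using idom_le[OF f] by blast
      then show "card P - card S < k" using that assms(3)
        unfolding alpha_clique_partition_def indep_gap_def by linarith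
    qed
  qed
  obtain Q where Q: "alpha_clique_partition V E Q" using alpha_partition_exists[OF assms(1,2)] by blast
  show ?thesis using ad dc Q by blast
qed

end
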